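(* Let $(Q,\rightarrow)$ be a finite transition system, $\mathscr{U}$ a preorder on $Q$, $\mathscr{R}\subseteq\mathscr{U}$ a preorder with $\mathscr{R}\circ\rightarrow^{-1}\subseteq\rightarrow^{-1}\circ\mathscr{U}$, $\mathscr{P}\subseteq\mathscr{R}$ an equivalence relation with a representative $E.\mathrm{rep}\in E$ fixed for each block $E$ of $\mathscr{P}$, and $\mathit{NotRel}=\mathscr{U}\setminus\mathscr{R}$. Then: 1. if $E\rightarrow B$ is a $(\mathscr{P},\mathscr{R})$-splitter transition of type 1, then $\mathit{NotRel}(B)\neq\emptyset$; 2. if there is no $(\mathscr{P},\mathscr{R})$-splitter transition of type 1 and $E\rightarrow B$ is a $(\mathscr{P},\mathscr{R})$-splitter transition of type 2, then $\mathit{NotRel}(B)\neq\emptyset$.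
   Context: $\mathscr{R}^{-1}=\{(y,x)\mid(x,y)\in\mathscr{R}\}$, $\mathscr{S}\circ\mathscr{R}=\{(x,y)\mid\exists z.\ x\,\mathscr{R}\,z\wedge z\,\mathscr{S}\,y\}$, $\mathscr{R}(X)=\{q'\mid\exists q\in X.\ q\,\mathscr{R}\,q'\}$, $\rightarrow^{-1}(Y)=\{q\mid\exists y\in Y.\ q\rightarrow y\}$. A preorder is a reflexive transitive relation; its blocks are $[q]_{\mathscr{R}}=\{q'\mid q\,\mathscr{R}\,q'\wedge q'\,\mathscr{R}\,q\}$. For sets, $X\rightarrow Y$ means some $x\in X,y\in Y$ have $x\rightarrow y$; $X\,\mathscr{R}\,Y$ means $(X\times Y)\cap\mathscr{R}\neq\emptyset$. $\mathrm{RelCount}_{(\mathscr{P},\mathscr{R})}(E,B)=|\{E'\text{ block of }\mathscr{P}\mid E.\mathrm{rep}\rightarrow E'\wedge B\,\mathscr{R}\,E'\}|$. A splitter transition of type 1 is a pair ($E$ block of $\mathscr{P}$, $B$ block of $\mathscr{R}$) with $E\rightarrow B$ and $\mathrm{RelCount}_{(\mathscr{P},\mathscr{R})}(E,B)=0$; of type 2, a pair with $E.\mathrm{rep}\rightarrow B$, $\mathrm{RelCount}_{(\mathscr{P},\mathscr{R})}(E,B)=|\{[b]_{\mathscr{P}}\subseteq B\mid E.\mathrm{rep}\rightarrow b\}|$ and $E\not\subseteq\rightarrow^{-1}(B)$. *)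

theory Defs
  imports Main
begin

definition preorder_rel :: "'a set \<Rightarrow> ('a \<times> 'a) set \<Rightarrow> bool" where
  "preorder_rel Q R \<longleftrightarrow> R \<subseteq> Q \<times> Q \<and> (\<forall>q\<in>Q. (q, q) \<in> R) \<and> trans R"

definition rblock :: "('a \<times> 'a) set \<Rightarrow> 'a \<Rightarrow> 'a set" where
  "rblock R q = {q'. (q, q') \<in> R \<and> (q', q) \<in> R}"

definition rblocks :: "'a set \<Rightarrow> ('a \<times> 'a) set \<Rightarrow> 'a set set" where
  "rblocks Q R = {rblock R q | q. q \<in> Q}"

definition set_trans :: "('a \<times> 'a) set \<Rightarrow> 'a set \<Rightarrow> 'a set \<Rightarrow> bool" where
  "set_trans T X Y \<longleftrightarrow> (\<exists>x\<in>X. \<exists>y\<in>Y. (x, y) \<in> T)"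

definition set_rel :: "('a \<times> 'a) set \<Rightarrow> 'a set \<Rightarrow> 'a set \<Rightarrow> bool" where
  "set_rel R X Y \<longleftrightarrow> (X \<times> Y) \<inter> R \<noteq> {}"

definition RelCount ::
  "'a set \<Rightarrow> ('a \<times> 'a) set \<Rightarrow> ('a \<times> 'a) set \<Rightarrow> ('a \<times> 'a) set \<Rightarrow> ('a set \<Rightarrow> 'a)
   \<Rightarrow> 'a set \<Rightarrow> 'a set \<Rightarrow> nat" where
  "RelCount Q T P R rep E B =
     card {E' \<in> Q // P. set_trans T {rep E} E' \<and> set_rel R B E'}"

definition splitter1 ::
  "'a set \<Rightarrow> ('a \<times> 'a) set \<Rightarrow> ('a \<times> 'a) set \<Rightarrow> ('a \<times> 'a) set \<Rightarrow> ('a set \<Rightarrow> 'a)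
   \<Rightarrow> 'a set \<Rightarrow> 'a set \<Rightarrow> bool" where
  "splitter1 Q T P R rep E B \<longleftrightarrow>
     E \<in> Q // P \<and> B \<in> rblocks Q R \<and> set_trans T E B \<and> RelCount Q T P R rep E B = 0"

definition splitter2 ::
  "'a set \<Rightarrow> ('a \<times> 'a) set \<Rightarrow> ('a \<times> 'a) set \<Rightarrow> ('a \<times> 'a) set \<Rightarrow> ('a set \<Rightarrow> 'a)
   \<Rightarrow> 'a set \<Rightarrow> 'a set \<Rightarrow> bool" where
  "splitter2 Q T P R rep E B \<longleftrightarrow>
     E \<in> Q // P \<and> B \<in> rblocks Q R \<and> set_trans T {rep E} B
     \<and> RelCount Q T P R rep E B = card {P `` {b} | b. P `` {b} \<subseteq> B \<and> (rep E, b) \<in> T}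
     \<and> \<not> E \<subseteq> (T\<inverse>) `` B"

end

theory Submission
  imports Defs
begin

lemma blk_rel:
  assumes "equiv Q P" "E \<in> Q // P" "x \<in> E" "y \<in> E"
  shows "(x, y) \<in> P"
  using assms by (meson quotient_eq_iff)

theorem proposition5:
  fixes Q :: "'a set" and T U R P :: "('a \<times> 'a) set" and rep :: "'a set \<Rightarrow> 'a"
    and E B :: "'a set"
  assumes fin: "finite Q"
    and T_sub: "T \<subseteq> Q \<times> Q"
    and U_pre: "preorder_rel Q U"
    and R_pre: "preorder_rel Q R"
    and RU: "R \<subseteq> U"
    and sim: "T\<inverse> O R \<subseteq> U O T\<inverse>"
    and P_equiv: "equiv Q P"
    and PR: "P \<subseteq> R"
    and rep: "\<forall>E'\<in>Q // P. rep E' \<in> E'"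
  shows "(splitter1 Q T P R rep E B \<longrightarrow> (U - R) `` B \<noteq> {})
       \<and> ((\<nexists>E' B'. splitter1 Q T P R rep E' B') \<and> splitter2 Q T P R rep E B
            \<longrightarrow> (U - R) `` B \<noteq> {})"
proof -
  have finQP: "finite (Q // P)" using fin P_equiv by (simp add: finite_quotient equiv_type)
  have Rtr: "trans R" and Rsub: "R \<subseteq> Q \<times> Q" and Rrefl: "\<And>q. q \<in> Q \<Longrightarrow> (q,q) \<in> R"
    using R_pre unfolding preorder_rel_def by auto
  have simI: "\<And>z x y. (z,x) \<in> T \<Longrightarrow> (z,y) \<in> R \<Longrightarrow> \<exists>w. (x,w) \<in> U \<and> (y,w) \<in> T"
    using sim by blast
  have blkQ: "\<And>w. w \<in> Q \<Longrightarrow> P `` {w} \<in> Q // P" by (simp add: quotientI)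
  have wP: "\<And>w. w \<in> Q \<Longrightarrow> w \<in> P `` {w}" using P_equiv
    by (simp add: equiv_def refl_on_def)
  show ?thesis
  proof (intro conjI impI)
    assume s1: "splitter1 Q T P R rep E B"
    then have EQ: "E \<in> Q // P" and tr: "set_trans T E B"
      and rc: "RelCount Q T P R rep E B = 0" unfolding splitter1_def by auto
    from tr obtain e b where e: "e \<in> E" and b: "b \<in> B" and eb: "(e,b) \<in> T"
      unfolding set_trans_def by auto
    have r: "rep E \<in> E" using rep EQ by auto
    have "(e, rep E) \<in> R" using blk_rel[OF P_equiv EQ e r] PR by auto
    then obtain w where bw: "(b,w) \<in> U" and rw: "(rep E, w) \<in> T" using simI eb by blast
    have wQ: "w \<in> Q" using rw T_sub by auto
    have "(b,w) \<notin> R"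
    proof
      assume "(b,w) \<in> R"
      then have "P `` {w} \<in> {E' \<in> Q // P. set_trans T {rep E} E' \<and> set_rel R B E'}"
        using blkQ[OF wQ] wP[OF wQ] rw b unfolding set_trans_def set_rel_def by blast
      moreover have "finite {E' \<in> Q // P. set_trans T {rep E} E' \<and> set_rel R B E'}"
        using finQP by auto
      ultimately show False using rc unfolding RelCount_def by auto
    qed
    then show "(U - R) `` B \<noteq> {}" using bw b by blast
  next
    assume "(\<nexists>E' B'. splitter1 Q T P R rep E' B') \<and> splitter2 Q T P R rep E B"
    then have no1: "\<And>E' B'. \<not> splitter1 Q T P R rep E' B'"
      and s2: "splitter2 Q T P R rep E B" by auto
    from s2 have EQ: "E \<in> Q // P" and BR: "B \<in> rblocks Q R" and tr: "set_trans T {rep E} B"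
      and rc: "RelCount Q T P R rep E B = card {P `` {b} | b. P `` {b} \<subseteq> B \<and> (rep E, b) \<in> T}"
      and ns: "\<not> E \<subseteq> (T\<inverse>) `` B" unfolding splitter2_def by auto
    define S1 where "S1 = {E' \<in> Q // P. set_trans T {rep E} E' \<and> set_rel R B E'}"
    define S2 where "S2 = {P `` {b} | b. P `` {b} \<subseteq> B \<and> (rep E, b) \<in> T}"
    obtain q where q: "q \<in> Q" and Bq: "B = rblock R q" using BR unfolding rblocks_def by auto
    have inB: "\<And>y. y \<in> B \<longleftrightarrow> (q,y) \<in> R \<and> (y,q) \<in> R" using Bq unfolding rblock_def by auto
    have BQ: "B \<subseteq> Q" using inB Rsub by auto
    have S21: "S2 \<subseteq> S1"
    proof
      fix X assume "X \<in> S2"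
      then obtain b where X: "X = P `` {b}" and Xb: "P `` {b} \<subseteq> B" and rb: "(rep E, b) \<in> T"
        unfolding S2_def by auto
      have bQ: "b \<in> Q" using rb T_sub by auto
      have bB: "b \<in> B" using Xb wP[OF bQ] by auto
      show "X \<in> S1" unfolding S1_def set_trans_def set_rel_def X
        using blkQ[OF bQ] wP[OF bQ] rb bB Rrefl[OF bQ] by blast
    qed
    have fS1: "finite S1" using finQP unfolding S1_def by auto
    have "card S1 = card S2" using rc unfolding S1_def S2_def RelCount_def by simp
    then have S12: "S1 = S2" using S21 fS1 by (metis card_subset_eq)
    from tr obtain b0 where b0: "b0 \<in> B" and rb0: "(rep E, b0) \<in> T"
      unfolding set_trans_def by auto
    from ns obtain e where e: "e \<in> E" and enot: "\<forall>y\<in>B. (e,y) \<notin> T" by auto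
    have r: "rep E \<in> E" using rep EQ by auto
    have "(rep E, e) \<in> R" using blk_rel[OF P_equiv EQ r e] PR by auto
    then obtain w where bw: "(b0,w) \<in> U" and ew: "(e, w) \<in> T" using simI rb0 by blast
    have wQ: "w \<in> Q" using ew T_sub by auto
    have wnB: "w \<notin> B" using enot ew by auto
    have "(b0,w) \<notin> R"
    proof
      assume b0w: "(b0,w) \<in> R"
      have "\<not> splitter1 Q T P R rep E (rblock R w)" using no1 by blast
      moreover have "rblock R w \<in> rblocks Q R" using wQ unfolding rblocks_def by auto
      moreover have "set_trans T E (rblock R w)" unfolding set_trans_def rblock_def
        using e ew Rrefl[OF wQ] by blast
      ultimately have "RelCount Q T P R rep E (rblock R w) \<noteq> 0"
        using EQ unfolding splitter1_def by auto
      then obtain E' where E'Q: "E' \<in> Q // P" and rE': "set_trans T {rep E} E'"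
        and relE': "set_rel R (rblock R w) E'"
        unfolding RelCount_def by (metis (mono_tags, lifting) card.empty empty_Collect_eq)
      from rE' obtain x where x: "x \<in> E'" and rx: "(rep E, x) \<in> T"
        unfolding set_trans_def by auto
      from relE' obtain w' x' where w': "w' \<in> rblock R w" and x': "x' \<in> E'" and wx': "(w',x') \<in> R"
        unfolding set_rel_def by auto
      have "(x',x) \<in> R" using blk_rel[OF P_equiv E'Q x' x] PR by auto
      moreover have "(w,w') \<in> R" using w' unfolding rblock_def by auto
      ultimately have wx: "(w,x) \<in> R" using wx' Rtr by (meson transD)
      have b0x: "(b0,x) \<in> R" using b0w wx Rtr by (meson transD)
      have "E' \<in> S1" unfolding S1_def set_trans_def set_rel_def using E'Q x rx b0 b0x by blast
      then have "E' \<in> S2" using S12 by simp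
      then have "E' \<subseteq> B" unfolding S2_def by auto
      then have "x \<in> B" using x by auto
      then have "(x,q) \<in> R" "(q,b0) \<in> R" using inB b0 by auto
      then have "(w,q) \<in> R" "(q,w) \<in> R" using wx b0w Rtr by (meson transD)+
      then show False using wnB inB by auto
    qed
    then show "(U - R) `` B \<noteq> {}" using bw b0 by blast
  qed
qed

end
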